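(* Let $G\subset\mathbb{R}^n$ be a convex body and let $K,L$ be compact convex subsets of $G$. Then there exist $u\in\mathbb{S}^{n-1}$ and either a point $q\in L$ such that $$\mathrm{int}\big(C_G(u,d_{\mathcal H}(K,L))+q\big)\subset (G+K\,\widetilde{\cup}\,L)\setminus(G+K),$$ or a point $q\in K$ such that $$\mathrm{int}\big(C_G(u,d_{\mathcal H}(K,L))+q\big)\subset (G+K\,\widetilde{\cup}\,L)\setminus(G+L).$$
   Context: A convex body is a compact convex set with non-empty interior. $K\,\widetilde{\cup}\,L$ is the closed convex hull of $K\cup L$; sums are Minkowski sums; $\mathrm{int}$ denotes Euclidean interior. $d_{\mathcal H}$ is the Hausdorff distance. The support function is $h_G(x)=\max\{y\cdot x: y\in G\}$, and for $u\in\mathbb{S}^{n-1}$ and $h\ge 0$ the cap of $G$ in direction $u$ with height $h$ is $C_G(u,h)=\{x\in G: u\cdot x\ge h_G(u)-h\}$. *)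

theory Defs
  imports "HOL-Analysis.Analysis"
begin

definition support_fun :: "'a::euclidean_space set \<Rightarrow> 'a \<Rightarrow> real" where
  "support_fun G x = (SUP y\<in>G. y \<bullet> x)"

definition cap :: "'a::euclidean_space set \<Rightarrow> 'a \<Rightarrow> real \<Rightarrow> 'a set" where
  "cap G u h = {x \<in> G. u \<bullet> x \<ge> support_fun G u - h}"

definition hausdorff_dist :: "'a::euclidean_space set \<Rightarrow> 'a set \<Rightarrow> real" where
  "hausdorff_dist K L = max (SUP x\<in>K. infdist x L) (SUP y\<in>L. infdist y K)"

definition conv_union :: "'a::euclidean_space set \<Rightarrow> 'a set \<Rightarrow> 'a set" where
  "conv_union K L = closure (convex hull (K \<union> L))"

end

theory Submission
  imports Defs
begin

lemma key_incl:
  fixes G K L :: "'a::euclidean_space set"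
  assumes "compact G" "p \<in> L" "norm u = 1"
    and sep: "\<forall>k\<in>K. u \<bullet> k \<le> u \<bullet> p - d"
  shows "interior ((\<lambda>x. x + p) ` cap G u d) \<subseteq> (G + conv_union K L) - (G + K)"
proof
  fix z assume z: "z \<in> interior ((\<lambda>x. x + p) ` cap G u d)"
  have bdd: "bdd_above ((\<lambda>y. y \<bullet> u) ` G)"
    using assms(1) by (intro bounded_imp_bdd_above compact_imp_bounded compact_continuous_image)
       (auto intro: continuous_intros)
  have up: "g \<bullet> u \<le> support_fun G u" if "g \<in> G" for g
    unfolding support_fun_def using bdd that by (rule cSUP_upper2) auto
  let ?c = "support_fun G u + u \<bullet> p - d"
  have sub: "(\<lambda>x. x + p) ` cap G u d \<subseteq> {w. u \<bullet> w \<ge> ?c}"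
    by (auto simp: cap_def inner_add_right)
  have "u \<noteq> 0" using assms(3) by auto
  then have "z \<in> {w. u \<bullet> w > ?c}"
    using z interior_mono[OF sub] by auto
  hence zc: "u \<bullet> z > ?c" by simp
  have zin: "z \<in> (\<lambda>x. x + p) ` cap G u d" using z interior_subset by blast
  have LC: "L \<subseteq> conv_union K L" unfolding conv_union_def
    by (meson Un_upper2 closure_subset hull_subset subset_trans)
  from zin obtain x where x: "x \<in> G" "z = x + p" by (auto simp: cap_def)
  have "z \<in> G + conv_union K L"
    unfolding x(2) using x(1) LC assms(2) by (intro set_plus_intro) auto
  moreover have "z \<notin> G + K"
  proof
    assume "z \<in> G + K"
    then obtain g k where "z = g + k" "g \<in> G" "k \<in> K" by (rule set_plus_elim)
    then have "u \<bullet> z \<le> support_fun G u + (u \<bullet> p - d)"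
      using up[of g] sep by (auto simp: inner_add_right inner_commute intro: add_mono)
    with zc show False by simp
  qed
  ultimately show "z \<in> (G + conv_union K L) - (G + K)" by blast
qed

lemma exist_dir:
  fixes K L :: "'a::euclidean_space set"
  assumes "compact K" "convex K" "K \<noteq> {}" "compact L" "convex L" "L \<noteq> {}"
    and le: "(SUP y\<in>K. infdist y L) \<le> (SUP x\<in>L. infdist x K)"
  shows "\<exists>u\<in>sphere 0 1. \<exists>p\<in>L. \<forall>k\<in>K. u \<bullet> k \<le> u \<bullet> p - hausdorff_dist K L"
proof -
  define d where "d = (SUP x\<in>L. infdist x K)"
  have hd: "hausdorff_dist K L = d" unfolding hausdorff_dist_def d_def using le by simp
  have cL: "continuous_on L (\<lambda>x. infdist x K)"
    by (rule continuous_on_infdist[OF continuous_on_id])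
  obtain p where p: "p \<in> L" "\<forall>x\<in>L. infdist x K \<le> infdist p K"
    using continuous_attains_sup[OF assms(4,6) cL] by blast
  have dp: "d = infdist p K" unfolding d_def
    using p by (intro antisym cSUP_least cSUP_upper2[where x=p]) (auto intro: bdd_aboveI2)
  have bddK: "bdd_above ((\<lambda>y. infdist y L) ` K)"
    using assms(1) by (intro bounded_imp_bdd_above compact_imp_bounded compact_continuous_image)
       (auto intro: continuous_intros)
  show ?thesis
  proof (cases "d = 0")
    case True
    have KL: "K \<subseteq> L"
    proof
      fix y assume y: "y \<in> K"
      have "infdist y L \<le> d" using cSUP_upper[OF y bddK] le d_def by simp
      then have "infdist y L = 0" using True infdist_nonneg[of y L] by simp
      then show "y \<in> L" using in_closed_iff_infdist_zero[of L y] assms compact_imp_closed by blast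
    qed
    obtain b :: 'a where b: "b \<in> Basis" using nonempty_Basis by blast
    have cb: "continuous_on K (\<lambda>x. b \<bullet> x)" by (intro continuous_intros)
    obtain q where q: "q \<in> K" "\<forall>x\<in>K. b \<bullet> x \<le> b \<bullet> q"
      using continuous_attains_sup[OF assms(1,3) cb] by blast
    show ?thesis
      by (rule bexI[where x=b], rule bexI[where x=q]) (use q KL b True hd in auto)
  next
    case False
    obtain k where k: "k \<in> K" "infdist p K = dist p k"
      using infdist_attains_inf[OF compact_imp_closed[OF assms(1)] assms(3)] by blast
    have dpos: "d > 0" using False dp infdist_nonneg[of p K] by simp
    have cl: "\<forall>z\<in>K. dist p k \<le> dist p z" using k infdist_le by metis
    define u where "u = (p - k) /\<^sub>R norm (p - k)"
    have nz: "norm (p - k) = d" using k dp by (simp add: dist_norm)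
    have un: "u \<in> sphere 0 1" using nz dpos by (simp add: u_def)
    have "\<forall>x\<in>K. u \<bullet> x \<le> u \<bullet> p - d"
    proof
      fix x assume x: "x \<in> K"
      have "(p - k) \<bullet> (x - k) \<le> 0"
        using any_closest_point_dot[OF assms(2) compact_imp_closed[OF assms(1)] k(1) x cl] .
      then have "(p - k) \<bullet> x \<le> (p - k) \<bullet> k" by (simp add: inner_diff_right)
      moreover have "(p - k) \<bullet> p - (p - k) \<bullet> k = d * d"
        using nz by (metis inner_diff_right power2_eq_square power2_norm_eq_inner)
      ultimately have "(p - k) \<bullet> x \<le> (p - k) \<bullet> p - d * d" by simp
      then have "((p - k) \<bullet> x) / d \<le> ((p - k) \<bullet> p - d * d) / d"
        using dpos by (simp add: divide_right_mono)
      moreover have "((p - k) \<bullet> p - d * d) / d = ((p - k) \<bullet> p) / d - d"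
        using dpos by (simp add: diff_divide_distrib)
      moreover have "u \<bullet> x = ((p - k) \<bullet> x) / d" "u \<bullet> p = ((p - k) \<bullet> p) / d"
        by (simp_all add: u_def nz divide_inverse mult.commute)
      ultimately show "u \<bullet> x \<le> u \<bullet> p - d" by simp
    qed
    then have "\<forall>x\<in>K. u \<bullet> x \<le> u \<bullet> p - hausdorff_dist K L" using hd by simp
    then show ?thesis using un p(1) by blast
  qed
qed

theorem lemma3p5:
  fixes G K L :: "'a::euclidean_space set"
  assumes "compact G" and "convex G" and "interior G \<noteq> {}"
    and "compact K" and "convex K" and "K \<noteq> {}" and "K \<subseteq> G"
    and "compact L" and "convex L" and "L \<noteq> {}" and "L \<subseteq> G"
  shows "\<exists>u \<in> sphere 0 1.
    (\<exists>q \<in> L. interior ((\<lambda>x. x + q) ` cap G u (hausdorff_dist K L))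
               \<subseteq> (G + conv_union K L) - (G + K))
  \<or> (\<exists>q \<in> K. interior ((\<lambda>x. x + q) ` cap G u (hausdorff_dist K L))
               \<subseteq> (G + conv_union K L) - (G + L))"
proof (cases "(SUP y\<in>K. infdist y L) \<le> (SUP x\<in>L. infdist x K)")
  case True
  then obtain u p where "u \<in> sphere 0 1" "p \<in> L"
      "\<forall>k\<in>K. u \<bullet> k \<le> u \<bullet> p - hausdorff_dist K L"
    using exist_dir[OF assms(4,5,6,8,9,10)] by blast
  then have "norm u = 1" "interior ((\<lambda>x. x + p) ` cap G u (hausdorff_dist K L)) \<subseteq> (G + conv_union K L) - (G + K)"
    using key_incl[OF assms(1), of p L u K "hausdorff_dist K L"] by auto
  then show ?thesis using \<open>u \<in> sphere 0 1\<close> \<open>p \<in> L\<close> by blast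
next
  case False
  have sym: "hausdorff_dist L K = hausdorff_dist K L" by (simp add: hausdorff_dist_def max.commute)
  have cu: "conv_union L K = conv_union K L" by (simp add: conv_union_def Un_commute)
  from False obtain u p where "u \<in> sphere 0 1" "p \<in> K"
      "\<forall>k\<in>L. u \<bullet> k \<le> u \<bullet> p - hausdorff_dist K L"
    using exist_dir[OF assms(8,9,10,4,5,6)] sym by fastforce
  then have "norm u = 1" "interior ((\<lambda>x. x + p) ` cap G u (hausdorff_dist K L)) \<subseteq> (G + conv_union K L) - (G + L)"
    using key_incl[OF assms(1), of p K u L "hausdorff_dist K L"] cu by auto
  then show ?thesis using \<open>u \<in> sphere 0 1\<close> \<open>p \<in> K\<close> by blast
qed

end
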